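(* Let $R_1,R_2$ be commutative rings with nonzero identity, let $I_1$ be a proper ideal of $R_1$ and $I_2$ a proper ideal of $R_2$, and put $R=R_1\times R_2$, $I=I_1\times I_2$. Then: (a) If at least one of the graphs $\Gamma''_{I_1}(R_1)$, $\Gamma''_{I_2}(R_2)$ is not totally disconnected (i.e. has at least one edge), then the girth of $\Gamma''_I(R)$ equals $3$. (b) If $R_1\setminus I_1\neq\{1_{R_1}\}$ and $R_2\setminus I_2\neq\{1_{R_2}\}$, then the girth of $\Gamma''_I(R)$ is at most $4$.
   Context: $R_1\times R_2$ has componentwise operations. For a commutative ring $S$ and an ideal $J$ of $S$, $\Gamma''_J(S)$ is the simple undirected graph whose vertex set is $\{x\in S\setminus J : xS+J\neq S\}$, and two distinct vertices $x,y$ are adjacent if and only if $x\notin yS+J$ and $y\notin xS+J$. A graph is totally disconnected if it has no edges. The girth of a graph is the length of a shortest cycle (and $\infty$ if there is no cycle). *)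

theory Defs
  imports Main "HOL-Library.Extended_Nat"
begin

text \<open>Ideals of a commutative ring (type class comm_ring_1, which includes 0 \<noteq> 1).\<close>
definition is_ideal :: "'a::comm_ring_1 set \<Rightarrow> bool" where
  "is_ideal I \<longleftrightarrow> 0 \<in> I \<and> (\<forall>x\<in>I. \<forall>y\<in>I. x + y \<in> I) \<and> (\<forall>x\<in>I. \<forall>r. r * x \<in> I)"

text \<open>Generic ring given by multiplication and addition on the whole type.
  The set xS + J.\<close>
definition princ_plus :: "('r \<Rightarrow> 'r \<Rightarrow> 'r) \<Rightarrow> ('r \<Rightarrow> 'r \<Rightarrow> 'r) \<Rightarrow> 'r set \<Rightarrow> 'r \<Rightarrow> 'r set" where
  "princ_plus mul add J x = {add (mul x s) j | s j. j \<in> J}"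

definition gamma_verts :: "('r \<Rightarrow> 'r \<Rightarrow> 'r) \<Rightarrow> ('r \<Rightarrow> 'r \<Rightarrow> 'r) \<Rightarrow> 'r set \<Rightarrow> 'r set" where
  "gamma_verts mul add J = {x. x \<notin> J \<and> princ_plus mul add J x \<noteq> UNIV}"

definition gamma_adj :: "('r \<Rightarrow> 'r \<Rightarrow> 'r) \<Rightarrow> ('r \<Rightarrow> 'r \<Rightarrow> 'r) \<Rightarrow> 'r set \<Rightarrow> 'r \<Rightarrow> 'r \<Rightarrow> bool" where
  "gamma_adj mul add J x y \<longleftrightarrow> x \<in> gamma_verts mul add J \<and> y \<in> gamma_verts mul add J \<and> x \<noteq> y
     \<and> x \<notin> princ_plus mul add J y \<and> y \<notin> princ_plus mul add J x"

definition prod_mul :: "'a::comm_ring_1 \<times> 'b::comm_ring_1 \<Rightarrow> 'a \<times> 'b \<Rightarrow> 'a \<times> 'b" where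
  "prod_mul x y = (fst x * fst y, snd x * snd y)"

definition prod_add :: "'a::comm_ring_1 \<times> 'b::comm_ring_1 \<Rightarrow> 'a \<times> 'b \<Rightarrow> 'a \<times> 'b" where
  "prod_add x y = (fst x + fst y, snd x + snd y)"

definition totally_disconnected :: "('r \<Rightarrow> 'r \<Rightarrow> bool) \<Rightarrow> bool" where
  "totally_disconnected E \<longleftrightarrow> \<not> (\<exists>x y. E x y)"

definition has_cycle :: "'r set \<Rightarrow> ('r \<Rightarrow> 'r \<Rightarrow> bool) \<Rightarrow> nat \<Rightarrow> bool" where
  "has_cycle V E n \<longleftrightarrow> n \<ge> 3 \<and> (\<exists>xs. length xs = n \<and> distinct xs \<and> set xs \<subseteq> V
       \<and> (\<forall>i<n. E (xs ! i) (xs ! ((i + 1) mod n))))"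

definition girth :: "'r set \<Rightarrow> ('r \<Rightarrow> 'r \<Rightarrow> bool) \<Rightarrow> enat" where
  "girth V E = (if \<exists>n. has_cycle V E n then enat (LEAST n. has_cycle V E n) else \<infinity>)"

end

theory Submission
  imports Defs
begin

lemma pp_prod:
  "princ_plus prod_mul prod_add (I1 \<times> I2) (x1, x2)
     = princ_plus (*) (+) I1 x1 \<times> princ_plus (*) (+) I2 x2"
proof (intro set_eqI iffI)
  fix y assume "y \<in> princ_plus prod_mul prod_add (I1 \<times> I2) (x1, x2)"
  then show "y \<in> princ_plus (*) (+) I1 x1 \<times> princ_plus (*) (+) I2 x2"
    unfolding princ_plus_def prod_mul_def prod_add_def by force
next
  fix y assume "y \<in> princ_plus (*) (+) I1 x1 \<times> princ_plus (*) (+) I2 x2"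
  then obtain s1 j1 s2 j2 where "j1 \<in> I1" "j2 \<in> I2" "y = (x1*s1 + j1, x2*s2 + j2)"
    unfolding princ_plus_def by auto
  then show "y \<in> princ_plus prod_mul prod_add (I1 \<times> I2) (x1, x2)"
    unfolding princ_plus_def prod_mul_def prod_add_def
    by (intro CollectI exI[of _ "(s1,s2)"] exI[of _ "(j1,j2)"]) auto
qed

lemma pp_zero: "is_ideal I \<Longrightarrow> princ_plus (*) (+) I (0::'a::comm_ring_1) = I"
  unfolding princ_plus_def is_ideal_def by auto

lemma pp_one: "is_ideal I \<Longrightarrow> y \<in> princ_plus (*) (+) I (1::'a::comm_ring_1)"
proof -
  assume "is_ideal I"
  then have "0 \<in> I" unfolding is_ideal_def by auto
  then have "y = 1 * y + 0 \<and> 0 \<in> I" by simp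
  then show ?thesis unfolding princ_plus_def by blast
qed

lemma verts_iff:
  "(x1, x2) \<in> gamma_verts prod_mul prod_add (I1 \<times> I2) \<longleftrightarrow>
     (x1 \<notin> I1 \<or> x2 \<notin> I2) \<and> (princ_plus (*) (+) I1 x1 \<noteq> UNIV \<or> princ_plus (*) (+) I2 x2 \<noteq> UNIV)"
proof -
  have "(A \<times> B = UNIV) \<longleftrightarrow> (A = UNIV \<and> B = UNIV)" for A :: "'a set" and B :: "'b set"
  proof
    assume h: "A \<times> B = UNIV"
    have "a \<in> A \<and> b \<in> B" for a b
    proof -
      have "(a, b) \<in> A \<times> B" using h by simp
      then show ?thesis by simp
    qed
    then show "A = UNIV \<and> B = UNIV" by auto
  qed auto
  then show ?thesis unfolding gamma_verts_def by (simp add: pp_prod)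
qed

lemma adj_iff:
  "gamma_adj prod_mul prod_add (I1 \<times> I2) (x1, x2) (y1, y2) \<longleftrightarrow>
     (x1, x2) \<in> gamma_verts prod_mul prod_add (I1 \<times> I2) \<and> (y1, y2) \<in> gamma_verts prod_mul prod_add (I1 \<times> I2)
     \<and> (x1, x2) \<noteq> (y1, y2)
     \<and> \<not> (x1 \<in> princ_plus (*) (+) I1 y1 \<and> x2 \<in> princ_plus (*) (+) I2 y2)
     \<and> \<not> (y1 \<in> princ_plus (*) (+) I1 x1 \<and> y2 \<in> princ_plus (*) (+) I2 x2)"
  unfolding gamma_adj_def by (simp only: pp_prod mem_Times_iff fst_conv snd_conv)

lemma girth_le: "has_cycle V E n \<Longrightarrow> girth V E \<le> enat n"
  unfolding girth_def by (auto intro: Least_le)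

lemma girth_3: "has_cycle V E 3 \<Longrightarrow> girth V E = 3"
proof -
  assume h: "has_cycle V E 3"
  have "(LEAST n. has_cycle V E n) = 3"
    by (rule Least_equality) (use h in \<open>auto simp: has_cycle_def\<close>)
  then show ?thesis using h unfolding girth_def by (auto simp: numeral_eq_enat)
qed

lemma cyc3:
  assumes "distinct [x,y,z]" "{x,y,z} \<subseteq> V" "E x y" "E y z" "E z x"
  shows "has_cycle V E 3"
  unfolding has_cycle_def
proof (intro conjI exI[of _ "[x,y,z]"])
  show "\<forall>i<3. E ([x,y,z] ! i) ([x,y,z] ! ((i + 1) mod 3))"
  proof (intro allI impI)
    fix i :: nat assume "i < 3"
    then have "i = 0 \<or> i = 1 \<or> i = 2" by auto
    then show "E ([x,y,z] ! i) ([x,y,z] ! ((i + 1) mod 3))" using assms by auto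
  qed
qed (use assms in auto)

lemma cyc4:
  assumes "distinct [x,y,z,w]" "{x,y,z,w} \<subseteq> V" "E x y" "E y z" "E z w" "E w x"
  shows "has_cycle V E 4"
  unfolding has_cycle_def
proof (intro conjI exI[of _ "[x,y,z,w]"])
  show "\<forall>i<4. E ([x,y,z,w] ! i) ([x,y,z,w] ! ((i + 1) mod 4))"
  proof (intro allI impI)
    fix i :: nat assume "i < 4"
    then have "i = 0 \<or> i = 1 \<or> i = 2 \<or> i = 3" by auto
    then show "E ([x,y,z,w] ! i) ([x,y,z,w] ! ((i + 1) mod 4))" using assms by auto
  qed
qed (use assms in auto)

lemma mem_pp_self: "is_ideal I \<Longrightarrow> (x::'a::comm_ring_1) \<in> princ_plus (*) (+) I x"
proof -
  assume "is_ideal I"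
  then have "0 \<in> I" unfolding is_ideal_def by auto
  then have "x = x * 1 + 0 \<and> 0 \<in> I" by simp
  then show ?thesis unfolding princ_plus_def by blast
qed

lemma I_sub_pp: "is_ideal I \<Longrightarrow> j \<in> I \<Longrightarrow> (j::'a::comm_ring_1) \<in> princ_plus (*) (+) I x"
proof -
  assume "j \<in> I"
  then have "j = x * 0 + j \<and> j \<in> I" by simp
  then show ?thesis unfolding princ_plus_def by blast
qed

theorem proposition2p8:
  fixes I1 :: "'a::comm_ring_1 set" and I2 :: "'b::comm_ring_1 set"
  assumes "is_ideal I1" and "I1 \<noteq> UNIV"
      and "is_ideal I2" and "I2 \<noteq> UNIV"
  shows "(\<not> totally_disconnected (gamma_adj (*) (+) I1) \<or> \<not> totally_disconnected (gamma_adj (*) (+) I2)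
            \<longrightarrow> girth (gamma_verts prod_mul prod_add (I1 \<times> I2)) (gamma_adj prod_mul prod_add (I1 \<times> I2)) = 3)
       \<and> (UNIV - I1 \<noteq> {1} \<and> UNIV - I2 \<noteq> {1}
            \<longrightarrow> girth (gamma_verts prod_mul prod_add (I1 \<times> I2)) (gamma_adj prod_mul prod_add (I1 \<times> I2)) \<le> 4)"
proof -
  let ?V = "gamma_verts prod_mul prod_add (I1 \<times> I2)"
  let ?E = "gamma_adj prod_mul prod_add (I1 \<times> I2)"
  have one1: "(1::'a) \<notin> I1" using assms(1,2) unfolding is_ideal_def
    by (metis UNIV_eq_I mult.right_neutral)
  have one2: "(1::'b) \<notin> I2" using assms(3,4) unfolding is_ideal_def
    by (metis UNIV_eq_I mult.right_neutral)
  have z1: "(0::'a) \<in> I1" and z2: "(0::'b) \<in> I2" using assms unfolding is_ideal_def by auto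
  note pz1 = pp_zero[OF assms(1)] and pz2 = pp_zero[OF assms(3)]
  have v01: "(0, 1) \<in> ?V" and v10: "(1, 0) \<in> ?V"
    using one1 one2 assms(2,4) by (simp_all add: verts_iff pz1 pz2)
  have A: "girth ?V ?E = 3" if "\<not> totally_disconnected (gamma_adj (*) (+) I1) \<or> \<not> totally_disconnected (gamma_adj (*) (+) I2)"
  proof (rule girth_3)
    show "has_cycle ?V ?E 3"
    proof (cases "\<not> totally_disconnected (gamma_adj (*) (+) I1)")
      case True
      then obtain a b where ab: "gamma_adj (*) (+) I1 a b" unfolding totally_disconnected_def by auto
      then have a: "a \<notin> I1" "princ_plus (*) (+) I1 a \<noteq> UNIV" and b: "b \<notin> I1" "princ_plus (*) (+) I1 b \<noteq> UNIV"
        and ab2: "a \<noteq> b" "a \<notin> princ_plus (*) (+) I1 b" "b \<notin> princ_plus (*) (+) I1 a"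
        unfolding gamma_adj_def gamma_verts_def by auto
      have "a \<noteq> 0" "b \<noteq> 0" using a b z1 by auto
      have va: "(a, 0) \<in> ?V" using a by (simp add: verts_iff)
      have vb: "(b, 0) \<in> ?V" using b by (simp add: verts_iff)
      have e1: "?E (a, 0) (b, 0)" using va vb ab2 by (simp add: adj_iff)
      have e2: "?E (b, 0) (0, 1)" using vb v01 b one2 by (simp add: adj_iff pz1 pz2)
      have e3: "?E (0, 1) (a, 0)" using va v01 a one2 by (simp add: adj_iff pz1 pz2)
      show ?thesis
        by (rule cyc3[where V="?V" and E="?E", OF _ _ e1 e2 e3]) (use va vb v01 ab2 \<open>a \<noteq> 0\<close> \<open>b \<noteq> 0\<close> in simp_all)
    next
      case False
      with that obtain a b where ab: "gamma_adj (*) (+) I2 a b" unfolding totally_disconnected_def by auto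
      then have a: "a \<notin> I2" "princ_plus (*) (+) I2 a \<noteq> UNIV" and b: "b \<notin> I2" "princ_plus (*) (+) I2 b \<noteq> UNIV"
        and ab2: "a \<noteq> b" "a \<notin> princ_plus (*) (+) I2 b" "b \<notin> princ_plus (*) (+) I2 a"
        unfolding gamma_adj_def gamma_verts_def by auto
      have "a \<noteq> 0" "b \<noteq> 0" using a b z2 by auto
      have va: "(0, a) \<in> ?V" using a by (simp add: verts_iff)
      have vb: "(0, b) \<in> ?V" using b by (simp add: verts_iff)
      have e1: "?E (0, a) (0, b)" using va vb ab2 by (simp add: adj_iff)
      have e2: "?E (0, b) (1, 0)" using vb v10 b one1 by (simp add: adj_iff pz1 pz2)
      have e3: "?E (1, 0) (0, a)" using va v10 a one1 by (simp add: adj_iff pz1 pz2)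
      show ?thesis
        by (rule cyc3[where V="?V" and E="?E", OF _ _ e1 e2 e3]) (use va vb v10 ab2 \<open>a \<noteq> 0\<close> \<open>b \<noteq> 0\<close> in simp_all)
    qed
  qed
  have B: "girth ?V ?E \<le> 4" if "UNIV - I1 \<noteq> {1} \<and> UNIV - I2 \<noteq> {1}"
  proof -
    have "\<exists>u. u \<notin> I1 \<and> u \<noteq> 1"
    proof (rule ccontr)
      assume "\<not> (\<exists>u. u \<notin> I1 \<and> u \<noteq> 1)"
      then have "UNIV - I1 = {1}" using one1 by (auto simp: set_eq_iff)
      then show False using that by simp
    qed
    then obtain u where u: "u \<notin> I1" "u \<noteq> 1" by blast
    have "\<exists>v. v \<notin> I2 \<and> v \<noteq> 1"
    proof (rule ccontr)
      assume "\<not> (\<exists>v. v \<notin> I2 \<and> v \<noteq> 1)"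
      then have "UNIV - I2 = {1}" using one2 by (auto simp: set_eq_iff)
      then show False using that by simp
    qed
    then obtain v where v: "v \<notin> I2" "v \<noteq> 1" by blast
    have "u \<noteq> 0" "v \<noteq> 0" using u v z1 z2 by auto
    have vu: "(u, 0) \<in> ?V" using u assms(4) by (simp add: verts_iff pz2)
    have vv: "(0, v) \<in> ?V" using v assms(2) by (simp add: verts_iff pz1)
    have e1: "?E (1, 0) (0, 1)" using v10 v01 one1 one2 by (simp add: adj_iff pz1 pz2)
    have e2: "?E (0, 1) (u, 0)" using vu v01 u one2 by (simp add: adj_iff pz1 pz2)
    have e3: "?E (u, 0) (0, v)" using vu vv u v \<open>u \<noteq> 0\<close> by (simp add: adj_iff pz1 pz2)
    have e4: "?E (0, v) (1, 0)" using vv v10 v one1 by (simp add: adj_iff pz1 pz2)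
    have "has_cycle ?V ?E 4"
      by (rule cyc4[where V="?V" and E="?E", OF _ _ e1 e2 e3 e4]) (use vu vv v01 v10 u v \<open>u \<noteq> 0\<close> \<open>v \<noteq> 0\<close> in simp_all)
    then have "girth ?V ?E \<le> enat 4" by (rule girth_le)
    then show ?thesis by (simp add: numeral_eq_enat)
  qed
  show ?thesis using A B by blast
qed

end
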